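(* Let $G=\mathbb Z_m*\mathbb Z_n$ with $m\ge2$, $n\ge3$, and let $\Delta_1$ be its first Laplacian as below. For $x\in\ell^2(G)^{\oplus2}$ we have $\Delta_1x=0$ if and only if there exist $z\in\ell^2(G)^{\oplus2}$ and $a\in\mathrm{im}(1-p)\cap\mathrm{im}(1-q)$ such that \[x=(I-C)z\qquad\text{and}\qquad \begin{bmatrix}1-s&0\\0&1-t\end{bmatrix}z=\frac{1}{\sqrt2}\begin{bmatrix}a\\-a\end{bmatrix}.\]
   Context: $G=\langle s,t\mid s^m,t^n\rangle$, with $s,t$ generating $\mathbb Z_m,\mathbb Z_n$; group ring elements act on $\ell^2(G)$ by the left regular representation. The first Laplacian (of the cochain complex from the presentation complex) is $\Delta_1=\begin{bmatrix}2-s-s^{-1}+m\sum_{0\le i<m}s^i & (1-s^{-1})(1-t)\\ (1-t^{-1})(1-s) & 2-t-t^{-1}+n\sum_{0\le j<n}t^j\end{bmatrix}$ acting on $\ell^2(G)^{\oplus2}$. Let $p=\frac1m\sum_{0\le i<m}s^i$, $q=\frac1n\sum_{0\le j<n}t^j$ (averaging projections), and $C=\mathrm{diag}(p,q)$. *)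

theory Defs
  imports "HOL-Analysis.Analysis"
begin

text \<open>The free product G = Z_m * Z_n, with Z_m generated by s and Z_n generated by t.
  Elements of G are reduced words: alternating sequences of letters LA i (standing for s^i,
  0 < i < m) and LB j (standing for t^j, 0 < j < n).\<close>

datatype letter = LA nat | LB nat

fun rw :: "nat \<Rightarrow> nat \<Rightarrow> letter list \<Rightarrow> bool" where
  "rw m n [] = True"
| "rw m n (LA i # w) =
     (0 < i \<and> i < m \<and> rw m n w \<and> (case w of LA _ # _ \<Rightarrow> False | _ \<Rightarrow> True))"
| "rw m n (LB j # w) =
     (0 < j \<and> j < n \<and> rw m n w \<and> (case w of LB _ # _ \<Rightarrow> False | _ \<Rightarrow> True))"

definition lmulA :: "nat \<Rightarrow> nat \<Rightarrow> letter list \<Rightarrow> letter list" where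
  "lmulA m k w = (case w of
      LA i # rest \<Rightarrow> (if (k + i) mod m = 0 then rest else LA ((k + i) mod m) # rest)
    | _ \<Rightarrow> (if k mod m = 0 then w else LA (k mod m) # w))"

definition lmulB :: "nat \<Rightarrow> nat \<Rightarrow> letter list \<Rightarrow> letter list" where
  "lmulB n k w = (case w of
      LB j # rest \<Rightarrow> (if (k + j) mod n = 0 then rest else LB ((k + j) mod n) # rest)
    | _ \<Rightarrow> (if k mod n = 0 then w else LB (k mod n) # w))"

type_synonym vec = "letter list \<Rightarrow> complex"

definition l2 :: "nat \<Rightarrow> nat \<Rightarrow> vec set" where
  "l2 m n = {f. (\<forall>w. \<not> rw m n w \<longrightarrow> f w = 0) \<and> (\<lambda>w. (cmod (f w))\<^sup>2) summable_on UNIV}"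

text \<open>Left regular representation: (g f)(h) = f(g^{-1} h).
  actS m n k is the operator of s^k, actT m n k the operator of t^k.\<close>

definition actS :: "nat \<Rightarrow> nat \<Rightarrow> nat \<Rightarrow> vec \<Rightarrow> vec" where
  "actS m n k f = (\<lambda>w. if rw m n w then f (lmulA m ((m - k mod m) mod m) w) else 0)"

definition actT :: "nat \<Rightarrow> nat \<Rightarrow> nat \<Rightarrow> vec \<Rightarrow> vec" where
  "actT m n k f = (\<lambda>w. if rw m n w then f (lmulB n ((n - k mod n) mod n) w) else 0)"

definition opS :: "nat \<Rightarrow> nat \<Rightarrow> vec \<Rightarrow> vec" where "opS m n = actS m n 1"
definition opSi :: "nat \<Rightarrow> nat \<Rightarrow> vec \<Rightarrow> vec" where "opSi m n = actS m n (m - 1)"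
definition opT :: "nat \<Rightarrow> nat \<Rightarrow> vec \<Rightarrow> vec" where "opT m n = actT m n 1"
definition opTi :: "nat \<Rightarrow> nat \<Rightarrow> vec \<Rightarrow> vec" where "opTi m n = actT m n (n - 1)"

definition sumS :: "nat \<Rightarrow> nat \<Rightarrow> vec \<Rightarrow> vec" where
  "sumS m n f = (\<lambda>w. \<Sum>i<m. actS m n i f w)"
definition sumT :: "nat \<Rightarrow> nat \<Rightarrow> vec \<Rightarrow> vec" where
  "sumT m n f = (\<lambda>w. \<Sum>j<n. actT m n j f w)"

definition projP :: "nat \<Rightarrow> nat \<Rightarrow> vec \<Rightarrow> vec" where
  "projP m n f = (\<lambda>w. sumS m n f w / of_nat m)"
definition projQ :: "nat \<Rightarrow> nat \<Rightarrow> vec \<Rightarrow> vec" where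
  "projQ m n f = (\<lambda>w. sumT m n f w / of_nat n)"

definition Lap1_fst :: "nat \<Rightarrow> nat \<Rightarrow> vec \<Rightarrow> vec \<Rightarrow> vec" where
  "Lap1_fst m n x1 x2 = (\<lambda>w.
      2 * x1 w - opS m n x1 w - opSi m n x1 w + of_nat m * sumS m n x1 w
    + (x2 w - opT m n x2 w - opSi m n x2 w + opSi m n (opT m n x2) w))"

definition Lap1_snd :: "nat \<Rightarrow> nat \<Rightarrow> vec \<Rightarrow> vec \<Rightarrow> vec" where
  "Lap1_snd m n x1 x2 = (\<lambda>w.
      (x1 w - opS m n x1 w - opTi m n x1 w + opTi m n (opS m n x1) w)
    + 2 * x2 w - opT m n x2 w - opTi m n x2 w + of_nat n * sumT m n x2 w)"

end

theory Submission
  imports Defs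
begin

definition supp :: "nat \<Rightarrow> nat \<Rightarrow> vec \<Rightarrow> bool" where
  "supp m n f \<longleftrightarrow> (\<forall>w. \<not> rw m n w \<longrightarrow> f w = 0)"

lemma lmulA_simps[simp]:
 "lmulA m k [] = (if k mod m = 0 then [] else [LA (k mod m)])"
 "lmulA m k (LA i # r) = (if (k+i) mod m = 0 then r else LA ((k+i) mod m) # r)"
 "lmulA m k (LB j # r) = (if k mod m = 0 then LB j # r else LA (k mod m) # LB j # r)"
  by (simp_all add: lmulA_def)

lemma lmulB_simps[simp]:
 "lmulB n k [] = (if k mod n = 0 then [] else [LB (k mod n)])"
 "lmulB n k (LB i # r) = (if (k+i) mod n = 0 then r else LB ((k+i) mod n) # r)"
 "lmulB n k (LA j # r) = (if k mod n = 0 then LA j # r else LB (k mod n) # LA j # r)"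
  by (simp_all add: lmulB_def)

lemma rw_LA: "rw m n (LA i # r) \<longleftrightarrow> 0 < i \<and> i < m \<and> rw m n r \<and> (\<forall>i' r'. r \<noteq> LA i' # r')"
  by (cases r rule: list.exhaust; simp split: letter.split)
lemma rw_LB: "rw m n (LB i # r) \<longleftrightarrow> 0 < i \<and> i < n \<and> rw m n r \<and> (\<forall>i' r'. r \<noteq> LB i' # r')"
  by (cases r rule: list.exhaust; simp split: letter.split)

lemma rw_lmulA: assumes "rw m n w" "0 < m" shows "rw m n (lmulA m k w)"
proof (cases w)
  case Nil then show ?thesis using assms by simp
next
  case (Cons l r)
  then show ?thesis using assms by (cases l) (auto simp: rw_LA rw_LB)
qed

lemma rw_lmulB: assumes "rw m n w" "0 < n" shows "rw m n (lmulB n k w)"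
proof (cases w)
  case Nil then show ?thesis using assms by simp
next
  case (Cons l r)
  then show ?thesis using assms by (cases l) (auto simp: rw_LA rw_LB)
qed


definition noA :: "letter list \<Rightarrow> bool" where "noA w \<longleftrightarrow> (\<forall>i r. w \<noteq> LA i # r)"
definition noB :: "letter list \<Rightarrow> bool" where "noB w \<longleftrightarrow> (\<forall>i r. w \<noteq> LB i # r)"

lemma lmulA_noA: "noA w \<Longrightarrow> lmulA m k w = (if k mod m = 0 then w else LA (k mod m) # w)"
  unfolding noA_def apply (cases w) apply simp subgoal for l r by (cases l) simp_all done
lemma lmulB_noB: "noB w \<Longrightarrow> lmulB n k w = (if k mod n = 0 then w else LB (k mod n) # w)"
  unfolding noB_def apply (cases w) apply simp subgoal for l r by (cases l) simp_all done

lemma wordA_cases: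
  assumes "rw m n w"
  obtains "noA w" | i r where "w = LA i # r" "noA r" "0 < i" "i < m" "rw m n r"
  using assms unfolding noA_def apply (cases w) apply simp subgoal for l r by (cases l) (auto simp del: rw.simps simp: rw_LA) done
lemma wordB_cases:
  assumes "rw m n w"
  obtains "noB w" | i r where "w = LB i # r" "noB r" "0 < i" "i < n" "rw m n r"
  using assms unfolding noB_def apply (cases w) apply simp subgoal for l r by (cases l) (auto simp del: rw.simps simp: rw_LB) done

lemma lmulA_cong: assumes "k mod m = k' mod m" shows "lmulA m k w = lmulA m k' w"
proof -
  have "(k + i) mod m = (k' + i) mod m" for i using assms by (metis mod_add_left_eq)
  then show ?thesis using assms unfolding lmulA_def by (simp split: list.split letter.split)
qed
lemma lmulB_cong: assumes "k mod n = k' mod n" shows "lmulB n k w = lmulB n k' w"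
proof -
  have "(k + i) mod n = (k' + i) mod n" for i using assms by (metis mod_add_left_eq)
  then show ?thesis using assms unfolding lmulB_def by (simp split: list.split letter.split)
qed

lemma lmulA_add: assumes "rw m n w" "0 < m" shows "lmulA m a (lmulA m b w) = lmulA m (a+b) w"
  using assms(1)
proof (cases rule: wordA_cases)
  case 1
  have nj: "noA (LA j # w) = False" for j by (simp add: noA_def)
  have e0: "b mod m = 0 \<Longrightarrow> (a + b) mod m = a mod m" by (metis add.right_neutral mod_add_right_eq)
  then show ?thesis using 1 nj by (simp add: lmulA_noA mod_add_right_eq)
next
  case (2 i r)
  have e1: "(a + (b + i) mod m) mod m = (a + b + i) mod m" by (simp add: mod_add_right_eq add.assoc)
  have e2: "(b + i) mod m = 0 \<Longrightarrow> (a + b + i) mod m = a mod m"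
    by (metis add.assoc add.right_neutral mod_add_right_eq)
  show ?thesis using 2 e1 e2 by (simp add: lmulA_noA add.assoc)
qed
lemma lmulB_add: assumes "rw m n w" "0 < n" shows "lmulB n a (lmulB n b w) = lmulB n (a+b) w"
  using assms(1)
proof (cases rule: wordB_cases)
  case 1
  have nj: "noB (LB j # w) = False" for j by (simp add: noB_def)
  have e0: "b mod n = 0 \<Longrightarrow> (a + b) mod n = a mod n" by (metis add.right_neutral mod_add_right_eq)
  then show ?thesis using 1 nj by (simp add: lmulB_noB mod_add_right_eq)
next
  case (2 i r)
  have e1: "(a + (b + i) mod n) mod n = (a + b + i) mod n" by (simp add: mod_add_right_eq add.assoc)
  have e2: "(b + i) mod n = 0 \<Longrightarrow> (a + b + i) mod n = a mod n"
    by (metis add.assoc add.right_neutral mod_add_right_eq)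
  show ?thesis using 2 e1 e2 by (simp add: lmulB_noB add.assoc)
qed

lemma lmulA_0: "rw m n w \<Longrightarrow> lmulA m 0 w = w"
  by (erule wordA_cases) (simp_all add: lmulA_noA)
lemma lmulB_0: "rw m n w \<Longrightarrow> lmulB n 0 w = w"
  by (erule wordB_cases) (simp_all add: lmulB_noB)


lemma sig_mod: "0 < (m::nat) \<Longrightarrow> ((m - k mod m) mod m + k) mod m = 0"
proof -
  assume m: "0 < m"
  have "k mod m < m" using m by simp
  show ?thesis
  proof (cases "k mod m = 0")
    case True thus ?thesis by (simp add: mod_add_right_eq[symmetric])
  next
    case False
    hence "(m - k mod m) mod m = m - k mod m" using \<open>k mod m < m\<close> by simp
    moreover have "(m - k mod m + k) mod m = (m - k mod m + k mod m) mod m"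
      by (simp add: mod_add_right_eq)
    ultimately show ?thesis using \<open>k mod m < m\<close> by simp
  qed
qed

lemma mod_cancel_nat: "(u + c) mod (m::nat) = (v + c) mod m \<Longrightarrow> 0 < m \<Longrightarrow> u mod m = v mod m"
proof -
  assume h: "(u + c) mod m = (v + c) mod m" and m: "0 < m"
  define d where "d = (m - c mod m) mod m"
  have cd: "(d + c) mod m = 0" using sig_mod[OF m] d_def by simp
  have "u mod m = (u + (d + c)) mod m" using cd by (metis add.right_neutral mod_add_right_eq)
  also have "\<dots> = ((u + c) + d) mod m" by (simp add: algebra_simps)
  also have "\<dots> = ((v + c) + d) mod m" using h by (metis mod_add_left_eq)
  also have "\<dots> = (v + (d + c)) mod m" by (simp add: algebra_simps)
  also have "\<dots> = v mod m" using cd by (metis add.right_neutral mod_add_right_eq)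
  finally show ?thesis .
qed

lemma sig_add: "0 < (m::nat) \<Longrightarrow>
  ((m - a mod m) mod m + (m - b mod m) mod m) mod m = (m - (a + b) mod m) mod m"
proof -
  assume m: "0 < m"
  have 1: "((m - a mod m) mod m + (m - b mod m) mod m + (a + b)) mod m = 0"
  proof -
    have "((m - a mod m) mod m + (m - b mod m) mod m + (a + b)) mod m
       = (((m - a mod m) mod m + a) + ((m - b mod m) mod m + b)) mod m" by (simp add: algebra_simps)
    also have "\<dots> = (((m - a mod m) mod m + a) mod m + ((m - b mod m) mod m + b) mod m) mod m"
      by (simp add: mod_add_eq)
    also have "\<dots> = 0" using sig_mod[OF m] by simp
    finally show ?thesis .
  qed
  have 2: "((m - (a+b) mod m) mod m + (a + b)) mod m = 0" using sig_mod[OF m] by simp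
  from 1 2 have "((m - a mod m) mod m + (m - b mod m) mod m) mod m = ((m - (a + b) mod m) mod m) mod m"
    using mod_cancel_nat[OF _ m] by metis
  thus ?thesis by simp
qed

lemma actS_actS: "0 < m \<Longrightarrow> actS m n a (actS m n b f) = actS m n (a+b) f"
proof (rule ext)
  fix w assume m: "0 < m"
  show "actS m n a (actS m n b f) w = actS m n (a+b) f w"
  proof (cases "rw m n w")
    case True
    have "lmulA m ((m - b mod m) mod m) (lmulA m ((m - a mod m) mod m) w)
        = lmulA m ((m - b mod m) mod m + (m - a mod m) mod m) w"
      using lmulA_add[OF True m] by simp
    also have "\<dots> = lmulA m ((m - (a + b) mod m) mod m) w"
      by (rule lmulA_cong) (use sig_add[OF m, of b a] in \<open>simp add: add.commute\<close>)
    finally show ?thesis using True rw_lmulA[OF True m] by (simp add: actS_def)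
  qed (simp add: actS_def)
qed

lemma actT_actT: "0 < n \<Longrightarrow> actT m n a (actT m n b f) = actT m n (a+b) f"
proof (rule ext)
  fix w assume n: "0 < n"
  show "actT m n a (actT m n b f) w = actT m n (a+b) f w"
  proof (cases "rw m n w")
    case True
    have "lmulB n ((n - b mod n) mod n) (lmulB n ((n - a mod n) mod n) w)
        = lmulB n ((n - b mod n) mod n + (n - a mod n) mod n) w"
      using lmulB_add[OF True n] by simp
    also have "\<dots> = lmulB n ((n - (a + b) mod n) mod n) w"
      by (rule lmulB_cong) (use sig_add[OF n, of b a] in \<open>simp add: add.commute\<close>)
    finally show ?thesis using True rw_lmulB[OF True n] by (simp add: actT_def)
  qed (simp add: actT_def)
qed

lemma actS_mod: "actS m n k f = actS m n (k mod m) f"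
  unfolding actS_def by (simp only: mod_mod_trivial)
lemma XX: True
  by (simp add: actS_def)
lemma actT_mod: "actT m n k f = actT m n (k mod n) f"
  unfolding actT_def by (simp only: mod_mod_trivial)
lemma XY: True
  by (simp add: actT_def)

lemma actS_0: "supp m n f \<Longrightarrow> actS m n 0 f = f"
  by (auto simp: actS_def supp_def lmulA_0 fun_eq_iff)
lemma actT_0: "supp m n f \<Longrightarrow> actT m n 0 f = f"
  by (auto simp: actT_def supp_def lmulB_0 fun_eq_iff)

lemma supp_actS[simp]: "supp m n (actS m n k f)" by (simp add: supp_def actS_def)
lemma supp_actT[simp]: "supp m n (actT m n k f)" by (simp add: supp_def actT_def)

lemma actS_add: "actS m n k (\<lambda>w. f w + g w) = (\<lambda>w. actS m n k f w + actS m n k g w)"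
  by (simp add: actS_def fun_eq_iff)
lemma actS_diff: "actS m n k (\<lambda>w. f w - g w) = (\<lambda>w. actS m n k f w - actS m n k g w)"
  by (simp add: actS_def fun_eq_iff)
lemma actS_cmul: "actS m n k (\<lambda>w. c * f w) = (\<lambda>w. c * actS m n k f w)"
  by (simp add: actS_def fun_eq_iff)
lemma actS_divc: "actS m n k (\<lambda>w. f w / c) = (\<lambda>w. actS m n k f w / c)"
  by (simp add: actS_def fun_eq_iff)
lemma actS_sum: "actS m n k (\<lambda>w. \<Sum>i\<in>I. g i w) = (\<lambda>w. \<Sum>i\<in>I. actS m n k (g i) w)"
  by (simp add: actS_def fun_eq_iff)
lemma actT_add: "actT m n k (\<lambda>w. f w + g w) = (\<lambda>w. actT m n k f w + actT m n k g w)"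
  by (simp add: actT_def fun_eq_iff)
lemma actT_diff: "actT m n k (\<lambda>w. f w - g w) = (\<lambda>w. actT m n k f w - actT m n k g w)"
  by (simp add: actT_def fun_eq_iff)
lemma actT_cmul: "actT m n k (\<lambda>w. c * f w) = (\<lambda>w. c * actT m n k f w)"
  by (simp add: actT_def fun_eq_iff)
lemma actT_divc: "actT m n k (\<lambda>w. f w / c) = (\<lambda>w. actT m n k f w / c)"
  by (simp add: actT_def fun_eq_iff)
lemma actT_sum: "actT m n k (\<lambda>w. \<Sum>i\<in>I. g i w) = (\<lambda>w. \<Sum>i\<in>I. actT m n k (g i) w)"
  by (simp add: actT_def fun_eq_iff)

lemma sumS_add: "sumS m n (\<lambda>w. f w + g w) = (\<lambda>w. sumS m n f w + sumS m n g w)"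
  by (simp add: sumS_def actS_add sum.distrib)
lemma sumS_diff: "sumS m n (\<lambda>w. f w - g w) = (\<lambda>w. sumS m n f w - sumS m n g w)"
  by (simp add: sumS_def actS_diff sum_subtractf)
lemma sumS_cmul: "sumS m n (\<lambda>w. c * f w) = (\<lambda>w. c * sumS m n f w)"
  by (simp add: sumS_def actS_cmul sum_distrib_left)
lemma sumT_add: "sumT m n (\<lambda>w. f w + g w) = (\<lambda>w. sumT m n f w + sumT m n g w)"
  by (simp add: sumT_def actT_add sum.distrib)
lemma sumT_diff: "sumT m n (\<lambda>w. f w - g w) = (\<lambda>w. sumT m n f w - sumT m n g w)"
  by (simp add: sumT_def actT_diff sum_subtractf)
lemma sumT_cmul: "sumT m n (\<lambda>w. c * f w) = (\<lambda>w. c * sumT m n f w)"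
  by (simp add: sumT_def actT_cmul sum_distrib_left)

lemma shift_sum: "g m = g 0 \<Longrightarrow> (\<Sum>i<m. g (Suc i)) = (\<Sum>i<m. (g i :: complex))"
proof -
  assume h: "g m = g 0"
  have "(\<Sum>i<Suc m. g i) = g 0 + (\<Sum>i<m. g (Suc i))" by (rule sum.lessThan_Suc_shift)
  moreover have "(\<Sum>i<Suc m. g i) = (\<Sum>i<m. g i) + g m" by simp
  ultimately show ?thesis using h by simp
qed

lemma sumS_shiftk: "0 < m \<Longrightarrow> (\<Sum>i<m. actS m n (i + k) f w) = (\<Sum>i<m. actS m n i f w)"
proof (induction k)
  case 0 then show ?case by simp
next
  case (Suc k)
  have "(\<Sum>i<m. actS m n (i + Suc k) f w) = (\<Sum>i<m. (\<lambda>j. actS m n (j + k) f w) (Suc i))" by simp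
  also have "\<dots> = (\<Sum>i<m. actS m n (i + k) f w)"
  proof (rule shift_sum)
    show "actS m n (m + k) f w = actS m n (0 + k) f w"
      using actS_mod[of m n "m+k" f] actS_mod[of m n "k" f] by simp
  qed
  finally show ?case using Suc by simp
qed

lemma sumT_shiftk: "0 < n \<Longrightarrow> (\<Sum>i<n. actT m n (i + k) f w) = (\<Sum>i<n. actT m n i f w)"
proof (induction k)
  case 0 then show ?case by simp
next
  case (Suc k)
  have "(\<Sum>i<n. actT m n (i + Suc k) f w) = (\<Sum>i<n. (\<lambda>j. actT m n (j + k) f w) (Suc i))" by simp
  also have "\<dots> = (\<Sum>i<n. actT m n (i + k) f w)"
  proof (rule shift_sum)
    show "actT m n (n + k) f w = actT m n (0 + k) f w"
      using actT_mod[of m n "n+k" f] actT_mod[of m n "k" f] by simp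
  qed
  finally show ?case using Suc by simp
qed

lemma sumS_actS: "0 < m \<Longrightarrow> sumS m n (actS m n k f) = sumS m n f"
  by (simp add: sumS_def actS_actS sumS_shiftk fun_eq_iff)
lemma sumT_actT: "0 < n \<Longrightarrow> sumT m n (actT m n k f) = sumT m n f"
  by (simp add: sumT_def actT_actT sumT_shiftk fun_eq_iff)

lemma actS_sumS: "0 < m \<Longrightarrow> actS m n k (sumS m n f) = sumS m n f"
proof -
  assume m: "0 < m"
  have "actS m n k (sumS m n f) = (\<lambda>w. \<Sum>i<m. actS m n k (actS m n i f) w)"
    unfolding sumS_def by (rule actS_sum)
  also have "\<dots> = (\<lambda>w. \<Sum>i<m. actS m n (i + k) f w)" by (simp add: actS_actS m add.commute)
  also have "\<dots> = sumS m n f" by (simp add: sumS_shiftk m sumS_def)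
  finally show ?thesis .
qed
lemma actT_sumT: "0 < n \<Longrightarrow> actT m n k (sumT m n f) = sumT m n f"
proof -
  assume n: "0 < n"
  have "actT m n k (sumT m n f) = (\<lambda>w. \<Sum>i<n. actT m n k (actT m n i f) w)"
    unfolding sumT_def by (rule actT_sum)
  also have "\<dots> = (\<lambda>w. \<Sum>i<n. actT m n (i + k) f w)" by (simp add: actT_actT n add.commute)
  also have "\<dots> = sumT m n f" by (simp add: sumT_shiftk n sumT_def)
  finally show ?thesis .
qed

lemma sumS_sumS: "0 < m \<Longrightarrow> sumS m n (sumS m n f) = (\<lambda>w. of_nat m * sumS m n f w)"
  by (simp add: sumS_def[of m n "sumS m n f"] actS_sumS)
lemma sumT_sumT: "0 < n \<Longrightarrow> sumT m n (sumT m n f) = (\<lambda>w. of_nat n * sumT m n f w)"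
  by (simp add: sumT_def[of m n "sumT m n f"] actT_sumT)

lemma supp_sumS: "supp m n (sumS m n f)"
  by (simp add: supp_def sumS_def actS_def)
lemma supp_sumT: "supp m n (sumT m n f)"
  by (simp add: supp_def sumT_def actT_def)

lemma Si_S: "0 < m \<Longrightarrow> supp m n f \<Longrightarrow> opSi m n (opS m n f) = f"
proof -
  assume m: "0 < m" and s: "supp m n f"
  have "opSi m n (opS m n f) = actS m n (m - 1 + 1) f" by (simp add: opSi_def opS_def actS_actS m)
  also have "\<dots> = actS m n 0 f" using m by (subst actS_mod) simp
  finally show ?thesis using actS_0[OF s] by simp
qed
lemma Ti_T: "0 < n \<Longrightarrow> supp m n f \<Longrightarrow> opTi m n (opT m n f) = f"
proof -
  assume n: "0 < n" and s: "supp m n f"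
  have "opTi m n (opT m n f) = actT m n (n - 1 + 1) f" by (simp add: opTi_def opT_def actT_actT n)
  also have "\<dots> = actT m n 0 f" using n by (subst actT_mod) simp
  finally show ?thesis using actT_0[OF s] by simp
qed

lemma Lap_fst_form:
  fixes x1 x2 :: vec
  assumes m: "0 < m" and s1: "supp m n x1"
  shows "Lap1_fst m n x1 x2 = (\<lambda>w. (x1 w - opS m n x1 w + (x2 w - opT m n x2 w))
     - opSi m n (\<lambda>w. x1 w - opS m n x1 w + (x2 w - opT m n x2 w)) w + of_nat m * sumS m n x1 w)"
proof -
  have lin: "opSi m n (\<lambda>w. x1 w - opS m n x1 w + (x2 w - opT m n x2 w)) = (\<lambda>w. opSi m n x1 w - opSi m n (opS m n x1) w + (opSi m n x2 w - opSi m n (opT m n x2) w))"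
    unfolding opSi_def actS_def by (simp add: fun_eq_iff)
  show ?thesis unfolding lin Si_S[OF m s1] unfolding Lap1_fst_def fun_eq_iff
    by (intro allI) (simp add: algebra_simps)
qed

lemma Lap_snd_form:
  fixes x1 x2 :: vec
  assumes n: "0 < n" and s2: "supp m n x2"
  shows "Lap1_snd m n x1 x2 = (\<lambda>w. (x1 w - opS m n x1 w + (x2 w - opT m n x2 w))
     - opTi m n (\<lambda>w. x1 w - opS m n x1 w + (x2 w - opT m n x2 w)) w + of_nat n * sumT m n x2 w)"
proof -
  have lin: "opTi m n (\<lambda>w. x1 w - opS m n x1 w + (x2 w - opT m n x2 w)) = (\<lambda>w. opTi m n x1 w - opTi m n (opS m n x1) w + (opTi m n x2 w - opTi m n (opT m n x2) w))"
    unfolding opTi_def actT_def by (simp add: fun_eq_iff)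
  show ?thesis unfolding lin Ti_T[OF n s2] unfolding Lap1_snd_def fun_eq_iff
    by (intro allI) (simp add: algebra_simps)
qed

lemma sumS_Lap:
  assumes m: "0 < m"
  shows "sumS m n (Lap1_fst m n x1 x2) = (\<lambda>w. of_nat m * of_nat m * sumS m n x1 w)"
proof -
  have "sumS m n (Lap1_fst m n x1 x2) = (\<lambda>w. 2 * sumS m n x1 w - sumS m n (opS m n x1) w - sumS m n (opSi m n x1) w
     + of_nat m * sumS m n (sumS m n x1) w + (sumS m n x2 w - sumS m n (opT m n x2) w - sumS m n (opSi m n x2) w
     + sumS m n (opSi m n (opT m n x2)) w))"
    unfolding Lap1_fst_def by (simp add: sumS_add sumS_diff sumS_cmul)
  also have "\<dots> = (\<lambda>w. of_nat m * of_nat m * sumS m n x1 w)"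
    by (simp add: opS_def opSi_def sumS_actS sumS_sumS m fun_eq_iff algebra_simps)
  finally show ?thesis .
qed

lemma sumT_Lap:
  assumes n: "0 < n"
  shows "sumT m n (Lap1_snd m n x1 x2) = (\<lambda>w. of_nat n * of_nat n * sumT m n x2 w)"
proof -
  have "sumT m n (Lap1_snd m n x1 x2) = (\<lambda>w. (sumT m n x1 w - sumT m n (opS m n x1) w - sumT m n (opTi m n x1) w
     + sumT m n (opTi m n (opS m n x1)) w) + 2 * sumT m n x2 w - sumT m n (opT m n x2) w - sumT m n (opTi m n x2) w
     + of_nat n * sumT m n (sumT m n x2) w)"
    unfolding Lap1_snd_def by (simp add: sumT_add sumT_diff sumT_cmul)
  also have "\<dots> = (\<lambda>w. of_nat n * of_nat n * sumT m n x2 w)"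
    by (simp add: opT_def opTi_def sumT_actT sumT_sumT n fun_eq_iff algebra_simps)
  finally show ?thesis .
qed

lemma all_actS_inv:
  assumes m: "0 < m" and s: "supp m n y" and h: "opSi m n y = y"
  shows "actS m n k y = y"
proof -
  have 1: "actS m n 1 y = y"
  proof -
    have "actS m n 1 y = actS m n 1 (actS m n (m - 1) y)" using h by (simp add: opSi_def)
    also have "\<dots> = actS m n (1 + (m - 1)) y" by (simp add: actS_actS m)
    also have "\<dots> = actS m n 0 y" using m by (subst actS_mod) simp
    finally show ?thesis using actS_0[OF s] by simp
  qed
  show ?thesis
  proof (induction k)
    case 0 then show ?case using actS_0[OF s] by simp
  next
    case (Suc k)
    have "actS m n (Suc k) y = actS m n 1 (actS m n k y)" by (simp add: actS_actS m)
    then show ?case using Suc 1 by simp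
  qed
qed

lemma all_actT_inv:
  assumes n: "0 < n" and s: "supp m n y" and h: "opTi m n y = y"
  shows "actT m n k y = y"
proof -
  have 1: "actT m n 1 y = y"
  proof -
    have "actT m n 1 y = actT m n 1 (actT m n (n - 1) y)" using h by (simp add: opTi_def)
    also have "\<dots> = actT m n (1 + (n - 1)) y" by (simp add: actT_actT n)
    also have "\<dots> = actT m n 0 y" using n by (subst actT_mod) simp
    finally show ?thesis using actT_0[OF s] by simp
  qed
  show ?thesis
  proof (induction k)
    case 0 then show ?case using actT_0[OF s] by simp
  next
    case (Suc k)
    have "actT m n (Suc k) y = actT m n 1 (actT m n k y)" by (simp add: actT_actT n)
    then show ?case using Suc 1 by simp
  qed
qed

lemma inv_const:
  assumes m: "0 < m" and n: "0 < n" and s: "supp m n y"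
    and hS: "\<And>k. actS m n k y = y" and hT: "\<And>k. actT m n k y = y"
  shows "rw m n w \<Longrightarrow> y w = y []"
proof (induction w)
  case Nil then show ?case by simp
next
  case (Cons l r)
  show ?case
  proof (cases l)
    case (LA i)
    with Cons.prems have i: "0 < i" "i < m" and r: "rw m n r" by (auto simp del: rw.simps simp: rw_LA)
    have "y (l # r) = actS m n i y (l # r)" using hS by simp
    also have "\<dots> = y (lmulA m ((m - i mod m) mod m) (LA i # r))" using Cons.prems LA by (simp add: actS_def)
    also have "lmulA m ((m - i mod m) mod m) (LA i # r) = r" using i by simp
    finally show ?thesis using Cons.IH r by simp
  next
    case (LB i)
    with Cons.prems have i: "0 < i" "i < n" and r: "rw m n r" by (auto simp del: rw.simps simp: rw_LB)
    have "y (l # r) = actT m n i y (l # r)" using hT by simp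
    also have "\<dots> = y (lmulB n ((n - i mod n) mod n) (LB i # r))" using Cons.prems LB by (simp add: actT_def)
    also have "lmulB n ((n - i mod n) mod n) (LB i # r) = r" using i by simp
    finally show ?thesis using Cons.IH r by simp
  qed
qed

lemma l2_supp: "f \<in> l2 m n \<Longrightarrow> supp m n f"
  by (simp add: l2_def supp_def)
lemma l2_sq: "f \<in> l2 m n \<Longrightarrow> (\<lambda>w. (cmod (f w))\<^sup>2) summable_on UNIV"
  by (simp add: l2_def)

lemma sq_ineq: "(cmod (a + b))\<^sup>2 \<le> 2 * (cmod a)\<^sup>2 + 2 * (cmod b)\<^sup>2"
proof -
  have "cmod (a + b) \<le> cmod a + cmod b" by (rule norm_triangle_ineq)
  hence "(cmod (a + b))\<^sup>2 \<le> (cmod a + cmod b)\<^sup>2" by (simp add: power_mono)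
  also have "\<dots> \<le> 2 * (cmod a)\<^sup>2 + 2 * (cmod b)\<^sup>2"
  proof -
    have h: "0 \<le> (cmod a - cmod b)\<^sup>2" by simp
    thus ?thesis unfolding power2_sum by (simp add: power2_diff)
  qed
  finally show ?thesis .
qed

lemma l2_add: "f \<in> l2 m n \<Longrightarrow> g \<in> l2 m n \<Longrightarrow> (\<lambda>w. f w + g w) \<in> l2 m n"
proof -
  assume f: "f \<in> l2 m n" and g: "g \<in> l2 m n"
  have "(\<lambda>w. 2 * (cmod (f w))\<^sup>2 + 2 * (cmod (g w))\<^sup>2) summable_on UNIV"
    using l2_sq[OF f] l2_sq[OF g] by (intro summable_on_add summable_on_cmult_right)
  hence "(\<lambda>w. (cmod (f w + g w))\<^sup>2) summable_on UNIV"
    by (rule summable_on_comparison_test) (auto simp: sq_ineq)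
  thus ?thesis using f g by (simp add: l2_def)
qed

lemma l2_cmul: "f \<in> l2 m n \<Longrightarrow> (\<lambda>w. c * f w) \<in> l2 m n"
proof -
  assume f: "f \<in> l2 m n"
  have "(\<lambda>w. (cmod c)\<^sup>2 * (cmod (f w))\<^sup>2) summable_on UNIV"
    using l2_sq[OF f] by (intro summable_on_cmult_right)
  hence "(\<lambda>w. (cmod (c * f w))\<^sup>2) summable_on UNIV"
    by (simp add: norm_mult power_mult_distrib)
  thus ?thesis using f by (simp add: l2_def)
qed

lemma l2_diff: "f \<in> l2 m n \<Longrightarrow> g \<in> l2 m n \<Longrightarrow> (\<lambda>w. f w - g w) \<in> l2 m n"
  using l2_add[of f m n "\<lambda>w. (-1) * g w"] l2_cmul[of g m n "-1"] by simp

lemma lmulA_inj: assumes m: "0 < m" shows "inj_on (lmulA m j) {w. rw m n w}"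
proof (rule inj_onI)
  fix u v assume u: "u \<in> {w. rw m n w}" and v: "v \<in> {w. rw m n w}" and e: "lmulA m j u = lmulA m j v"
  have c: "((m - j mod m) mod m + j) mod m = 0 mod m" using sig_mod[OF m] by simp
  have "u = lmulA m 0 u" using u lmulA_0 by simp
  also have "\<dots> = lmulA m ((m - j mod m) mod m + j) u" by (rule lmulA_cong) (use c in simp)
  also have "\<dots> = lmulA m ((m - j mod m) mod m) (lmulA m j u)" using u m by (simp add: lmulA_add)
  also have "\<dots> = lmulA m ((m - j mod m) mod m) (lmulA m j v)" using e by simp
  also have "\<dots> = lmulA m ((m - j mod m) mod m + j) v" using v m by (simp add: lmulA_add)
  also have "\<dots> = lmulA m 0 v" by (rule lmulA_cong) (use c in simp)
  also have "\<dots> = v" using v lmulA_0 by simp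
  finally show "u = v" .
qed

lemma lmulB_inj: assumes n: "0 < n" shows "inj_on (lmulB n j) {w. rw m n w}"
proof (rule inj_onI)
  fix u v assume u: "u \<in> {w. rw m n w}" and v: "v \<in> {w. rw m n w}" and e: "lmulB n j u = lmulB n j v"
  have c: "((n - j mod n) mod n + j) mod n = 0 mod n" using sig_mod[OF n] by simp
  have "u = lmulB n 0 u" using u lmulB_0 by simp
  also have "\<dots> = lmulB n ((n - j mod n) mod n + j) u" by (rule lmulB_cong) (use c in simp)
  also have "\<dots> = lmulB n ((n - j mod n) mod n) (lmulB n j u)" using u n by (simp add: lmulB_add)
  also have "\<dots> = lmulB n ((n - j mod n) mod n) (lmulB n j v)" using e by simp
  also have "\<dots> = lmulB n ((n - j mod n) mod n + j) v" using v n by (simp add: lmulB_add)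
  also have "\<dots> = lmulB n 0 v" by (rule lmulB_cong) (use c in simp)
  also have "\<dots> = v" using v lmulB_0 by simp
  finally show "u = v" .
qed

lemma summable_transl:
  assumes inj: "inj_on \<phi> R" and h: "(h::_ \<Rightarrow> real) summable_on UNIV"
  shows "(\<lambda>w. if w \<in> R then h (\<phi> w) else 0) summable_on UNIV"
proof -
  have "h summable_on (\<phi> ` R)" using h by (rule summable_on_subset) simp
  hence "(h \<circ> \<phi>) summable_on R" using summable_on_reindex[OF inj, of h] by simp
  hence "(\<lambda>w. if w \<in> R then h (\<phi> w) else 0) summable_on R"
    by (rule summable_on_cong[THEN iffD1, rotated]) simp
  thus ?thesis
    by (rule summable_on_cong_neutral[THEN iffD1, rotated -1]) auto
qed

lemma l2_actS: assumes m: "0 < m" and f: "f \<in> l2 m n" shows "actS m n k f \<in> l2 m n"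
proof -
  have "(\<lambda>w. if w \<in> {w. rw m n w} then (\<lambda>v. (cmod (f v))\<^sup>2) (lmulA m ((m - k mod m) mod m) w) else 0) summable_on UNIV"
    by (rule summable_transl[OF lmulA_inj[OF m] l2_sq[OF f]])
  hence "(\<lambda>w. (cmod (actS m n k f w))\<^sup>2) summable_on UNIV"
    by (rule summable_on_cong[THEN iffD1, rotated]) (simp add: actS_def)
  thus ?thesis by (simp add: l2_def actS_def)
qed

lemma l2_actT: assumes n: "0 < n" and f: "f \<in> l2 m n" shows "actT m n k f \<in> l2 m n"
proof -
  have "(\<lambda>w. if w \<in> {w. rw m n w} then (\<lambda>v. (cmod (f v))\<^sup>2) (lmulB n ((n - k mod n) mod n) w) else 0) summable_on UNIV"
    by (rule summable_transl[OF lmulB_inj[OF n] l2_sq[OF f]])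
  hence "(\<lambda>w. (cmod (actT m n k f w))\<^sup>2) summable_on UNIV"
    by (rule summable_on_cong[THEN iffD1, rotated]) (simp add: actT_def)
  thus ?thesis by (simp add: l2_def actT_def)
qed

fun alt :: "nat \<Rightarrow> letter list" where
  "alt 0 = []"
| "alt (Suc k) = LA 1 # LB 1 # alt k"

lemma alt_rw: "2 \<le> m \<Longrightarrow> 2 \<le> n \<Longrightarrow> rw m n (alt k) \<and> noB (alt k)"
proof (induction k)
  case 0 then show ?case by (simp add: noB_def)
next
  case (Suc k)
  assume "2 \<le> m" "2 \<le> n"
  with Suc have "rw m n (LB 1 # alt k)" by (simp del: rw.simps add: rw_LB noB_def)
  with \<open>2 \<le> m\<close> have "rw m n (LA 1 # LB 1 # alt k)" by (simp del: rw.simps add: rw_LA)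
  then show ?case by (simp add: noB_def)
qed

lemma length_alt: "length (alt k) = 2 * k"
  by (induction k) auto

lemma infinite_rw: assumes "2 \<le> m" "2 \<le> n" shows "infinite {w. rw m n w}"
proof
  assume fin: "finite {w. rw m n w}"
  have "range alt \<subseteq> {w. rw m n w}" using alt_rw[OF assms] by auto
  hence "finite (range alt)" using fin finite_subset by blast
  moreover have "inj alt" by (rule injI) (metis length_alt mult_left_cancel zero_neq_numeral)
  ultimately show False using finite_imageD by (metis infinite_UNIV_nat)
qed

lemma l2_const:
  assumes "2 \<le> m" "2 \<le> n" and f: "f \<in> l2 m n" and c: "\<And>w. rw m n w \<Longrightarrow> f w = c"
  shows "c = 0"
proof (rule ccontr)
  assume "c \<noteq> 0"
  hence ne: "(cmod c)\<^sup>2 \<noteq> 0" by simp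
  have "(\<lambda>w. (cmod (f w))\<^sup>2) summable_on {w. rw m n w}"
    using l2_sq[OF f] by (rule summable_on_subset) simp
  hence "(\<lambda>_. (cmod c)\<^sup>2) summable_on {w. rw m n w}"
    by (rule summable_on_cong[THEN iffD1, rotated]) (simp add: c)
  thus False using infsum_diverge_constant[OF infinite_rw[OF assms(1,2)] ne] by simp
qed

lemma projP_eq: "projP m n f = (\<lambda>w. inverse (of_nat m) * sumS m n f w)"
  by (simp add: projP_def fun_eq_iff field_simps)
lemma projQ_eq: "projQ m n f = (\<lambda>w. inverse (of_nat n) * sumT m n f w)"
  by (simp add: projQ_def fun_eq_iff field_simps)

lemma actS_projP: "0 < m \<Longrightarrow> actS m n k (projP m n f) = projP m n f"
  by (simp add: projP_eq actS_cmul actS_sumS)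
lemma actT_projQ: "0 < n \<Longrightarrow> actT m n k (projQ m n f) = projQ m n f"
  by (simp add: projQ_eq actT_cmul actT_sumT)

lemma sumS_projP: "0 < m \<Longrightarrow> sumS m n (projP m n f) = sumS m n f"
  by (simp add: projP_eq sumS_cmul sumS_sumS fun_eq_iff)
lemma sumT_projQ: "0 < n \<Longrightarrow> sumT m n (projQ m n f) = sumT m n f"
  by (simp add: projQ_eq sumT_cmul sumT_sumT fun_eq_iff)

lemma sumS_zero: "sumS m n (\<lambda>_. 0) = (\<lambda>_. 0)" by (simp add: sumS_def actS_def)
lemma sumT_zero: "sumT m n (\<lambda>_. 0) = (\<lambda>_. 0)" by (simp add: sumT_def actT_def)

lemma supp_diff: "supp m n f \<Longrightarrow> supp m n g \<Longrightarrow> supp m n (\<lambda>w. f w - g w)" by (simp add: supp_def)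
lemma supp_add: "supp m n f \<Longrightarrow> supp m n g \<Longrightarrow> supp m n (\<lambda>w. f w + g w)" by (simp add: supp_def)
lemma supp_projP: "supp m n (projP m n f)" using supp_sumS by (simp add: projP_def supp_def)
lemma supp_projQ: "supp m n (projQ m n f)" using supp_sumT by (simp add: projQ_def supp_def)

theorem lemma4p4:
  fixes m n :: nat and x1 x2 :: vec
  assumes "m \<ge> 2" and "n \<ge> 3"
    and "x1 \<in> l2 m n" and "x2 \<in> l2 m n"
  shows "(Lap1_fst m n x1 x2 = (\<lambda>_. 0) \<and> Lap1_snd m n x1 x2 = (\<lambda>_. 0)) \<longleftrightarrow>
    (\<exists>z1 \<in> l2 m n. \<exists>z2 \<in> l2 m n. \<exists>a.
       (\<exists>b \<in> l2 m n. a = (\<lambda>w. b w - projP m n b w)) \<and>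
       (\<exists>c \<in> l2 m n. a = (\<lambda>w. c w - projQ m n c w)) \<and>
       x1 = (\<lambda>w. z1 w - projP m n z1 w) \<and>
       x2 = (\<lambda>w. z2 w - projQ m n z2 w) \<and>
       (\<lambda>w. z1 w - opS m n z1 w) = (\<lambda>w. a w / complex_of_real (sqrt 2)) \<and>
       (\<lambda>w. z2 w - opT m n z2 w) = (\<lambda>w. - a w / complex_of_real (sqrt 2)))"
proof -
  have m: "0 < m" and n: "0 < n" using assms by auto
  have s1: "supp m n x1" and s2: "supp m n x2" using assms l2_supp by auto
  define y where "y = (\<lambda>w. x1 w - opS m n x1 w + (x2 w - opT m n x2 w))"
  have LF: "Lap1_fst m n x1 x2 = (\<lambda>w. y w - opSi m n y w + of_nat m * sumS m n x1 w)"
    unfolding y_def by (rule Lap_fst_form[OF m s1])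
  have LS: "Lap1_snd m n x1 x2 = (\<lambda>w. y w - opTi m n y w + of_nat n * sumT m n x2 w)"
    unfolding y_def by (rule Lap_snd_form[OF n s2])
  have sy: "supp m n y" unfolding y_def opS_def opT_def
    by (intro supp_add supp_diff s1 s2 supp_actS supp_actT)
  have sqne: "complex_of_real (sqrt 2) \<noteq> 0" by simp
  show ?thesis
  proof
    assume L: "Lap1_fst m n x1 x2 = (\<lambda>_. 0) \<and> Lap1_snd m n x1 x2 = (\<lambda>_. 0)"
    have "sumS m n (Lap1_fst m n x1 x2) = (\<lambda>w. of_nat m * of_nat m * sumS m n x1 w)"
      by (rule sumS_Lap[OF m])
    hence Z1: "(\<lambda>w. of_nat m * of_nat m * sumS m n x1 w) = (\<lambda>_. 0)"
      using L sumS_zero by metis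
    have S0: "sumS m n x1 w = 0" for w using m fun_cong[OF Z1, of w] by simp
    have "sumT m n (Lap1_snd m n x1 x2) = (\<lambda>w. of_nat n * of_nat n * sumT m n x2 w)"
      by (rule sumT_Lap[OF n])
    hence Z2: "(\<lambda>w. of_nat n * of_nat n * sumT m n x2 w) = (\<lambda>_. 0)"
      using L sumT_zero by metis
    have T0: "sumT m n x2 w = 0" for w using n fun_cong[OF Z2, of w] by simp
    have "opSi m n y w = y w" for w using fun_cong[OF LF, of w] L S0 by simp
    hence hS: "opSi m n y = y" by auto
    have "opTi m n y w = y w" for w using fun_cong[OF LS, of w] L T0 by simp
    hence hT: "opTi m n y = y" by auto
    have yc: "rw m n w \<Longrightarrow> y w = y []" for w
      by (rule inv_const[OF m n sy all_actS_inv[OF m sy hS] all_actT_inv[OF n sy hT]])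
    have A1: "(\<lambda>w. x1 w - opS m n x1 w) \<in> l2 m n"
      unfolding opS_def by (rule l2_diff[OF assms(3) l2_actS[OF m assms(3)]])
    have A2: "(\<lambda>w. x2 w - opT m n x2 w) \<in> l2 m n"
      unfolding opT_def by (rule l2_diff[OF assms(4) l2_actT[OF n assms(4)]])
    have yl2: "y \<in> l2 m n" unfolding y_def using l2_add[OF A1 A2] by simp
    have n2: "2 \<le> n" using assms(2) by simp
    have "y [] = 0" by (rule l2_const[OF assms(1) n2 yl2 yc])
    hence y0: "y w = 0" for w proof (cases "rw m n w")
      case True then show ?thesis using yc[OF True] \<open>y [] = 0\<close> by simp
    next
      case False then show ?thesis using sy by (simp add: supp_def)
    qed
    define a where "a = (\<lambda>w. complex_of_real (sqrt 2) * (x1 w - opS m n x1 w))"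
    have a2: "a = (\<lambda>w. complex_of_real (sqrt 2) * (- 1) * (x2 w - opT m n x2 w))"
    proof (rule ext)
      fix w
      have "x1 w - opS m n x1 w = - (x2 w - opT m n x2 w)" using y0[of w] unfolding y_def
        by (simp add: add_eq_0_iff2)
      thus "a w = complex_of_real (sqrt 2) * (- 1) * (x2 w - opT m n x2 w)" unfolding a_def by (simp only:) (simp add: algebra_simps)
    qed
    have al2: "a \<in> l2 m n" unfolding a_def using l2_cmul[OF A1] by simp
    have pa: "projP m n a = (\<lambda>_. 0)"
      unfolding projP_eq a_def by (simp add: sumS_cmul sumS_diff opS_def sumS_actS m)
    have qa: "projQ m n a = (\<lambda>_. 0)"
      unfolding projQ_eq a2 sumT_cmul sumT_diff opT_def sumT_actT[OF n] by simp
    show "\<exists>z1 \<in> l2 m n. \<exists>z2 \<in> l2 m n. \<exists>a.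
       (\<exists>b \<in> l2 m n. a = (\<lambda>w. b w - projP m n b w)) \<and>
       (\<exists>c \<in> l2 m n. a = (\<lambda>w. c w - projQ m n c w)) \<and>
       x1 = (\<lambda>w. z1 w - projP m n z1 w) \<and>
       x2 = (\<lambda>w. z2 w - projQ m n z2 w) \<and>
       (\<lambda>w. z1 w - opS m n z1 w) = (\<lambda>w. a w / complex_of_real (sqrt 2)) \<and>
       (\<lambda>w. z2 w - opT m n z2 w) = (\<lambda>w. - a w / complex_of_real (sqrt 2))"
    proof -
      have g1: "\<exists>b \<in> l2 m n. a = (\<lambda>w. b w - projP m n b w)" using pa al2 by (intro bexI[of _ a]) simp_all
      have g2: "\<exists>c \<in> l2 m n. a = (\<lambda>w. c w - projQ m n c w)" using qa al2 by (intro bexI[of _ a]) simp_all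
      have g3: "x1 = (\<lambda>w. x1 w - projP m n x1 w)" using S0 by (simp add: projP_def)
      have g4: "x2 = (\<lambda>w. x2 w - projQ m n x2 w)" using T0 by (simp add: projQ_def)
      have g5: "(\<lambda>w. x1 w - opS m n x1 w) = (\<lambda>w. a w / complex_of_real (sqrt 2))"
        using sqne by (simp add: a_def fun_eq_iff)
      have g6: "(\<lambda>w. x2 w - opT m n x2 w) = (\<lambda>w. - a w / complex_of_real (sqrt 2))"
        using sqne by (simp add: a2 fun_eq_iff)
      show ?thesis
        apply (rule bexI[of _ x1], rule bexI[of _ x2], rule exI[of _ a])
          apply (intro conjI g1 g2 g3 g4 g5 g6)
        using assms(3,4) by simp_all
    qed
  next
    assume "\<exists>z1 \<in> l2 m n. \<exists>z2 \<in> l2 m n. \<exists>a.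
       (\<exists>b \<in> l2 m n. a = (\<lambda>w. b w - projP m n b w)) \<and>
       (\<exists>c \<in> l2 m n. a = (\<lambda>w. c w - projQ m n c w)) \<and>
       x1 = (\<lambda>w. z1 w - projP m n z1 w) \<and>
       x2 = (\<lambda>w. z2 w - projQ m n z2 w) \<and>
       (\<lambda>w. z1 w - opS m n z1 w) = (\<lambda>w. a w / complex_of_real (sqrt 2)) \<and>
       (\<lambda>w. z2 w - opT m n z2 w) = (\<lambda>w. - a w / complex_of_real (sqrt 2))"
    then obtain z1 z2 a where x1: "x1 = (\<lambda>w. z1 w - projP m n z1 w)"
      and x2: "x2 = (\<lambda>w. z2 w - projQ m n z2 w)"
      and e1: "(\<lambda>w. z1 w - opS m n z1 w) = (\<lambda>w. a w / complex_of_real (sqrt 2))"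
      and e2: "(\<lambda>w. z2 w - opT m n z2 w) = (\<lambda>w. - a w / complex_of_real (sqrt 2))"
      by (elim bexE exE conjE) (rule that; assumption)
    have S0: "sumS m n x1 w = 0" for w
      unfolding x1 by (simp add: sumS_diff sumS_projP m)
    have T0: "sumT m n x2 w = 0" for w
      unfolding x2 by (simp add: sumT_diff sumT_projQ n)
    have d1: "x1 w - opS m n x1 w = a w / complex_of_real (sqrt 2)" for w
    proof -
      have "x1 w - opS m n x1 w = z1 w - opS m n z1 w"
        unfolding x1 opS_def by (simp add: actS_diff actS_projP m)
      thus ?thesis using fun_cong[OF e1, of w] by simp
    qed
    have d2: "x2 w - opT m n x2 w = - a w / complex_of_real (sqrt 2)" for w
    proof -
      have "x2 w - opT m n x2 w = z2 w - opT m n z2 w"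
        unfolding x2 opT_def by (simp add: actT_diff actT_projQ n)
      thus ?thesis using fun_cong[OF e2, of w] by simp
    qed
    have y0: "y = (\<lambda>_. 0)" unfolding y_def fun_eq_iff using d1 d2 by (simp add: diff_divide_distrib)
    have "opSi m n (\<lambda>_. 0) = (\<lambda>_. 0)" "opTi m n (\<lambda>_. 0) = (\<lambda>_. 0)"
      by (simp_all add: opSi_def opTi_def actS_def actT_def fun_eq_iff)
    then show "Lap1_fst m n x1 x2 = (\<lambda>_. 0) \<and> Lap1_snd m n x1 x2 = (\<lambda>_. 0)"
      unfolding LF LS y0 using S0 T0 by simp
  qed
qed

end
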